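(* Let $w$ be a non-degenerate 3-web on an open subset of $\mathbb{R}^3$ formed by two foliations by surfaces and one foliation by curves. Then the rank of $w$ is at most $1$.
   Context: For a web $w$ formed by foliations $\mathcal{F}_1,\dots,\mathcal{F}_d$ (leaves may have different dimensions), an abelian relation is a $d$-tuple of 1-forms $(\sigma_1,\dots,\sigma_d)$ such that each $\sigma_i$ vanishes on the leaves of $\mathcal{F}_i$, each $\sigma_i$ is closed, and $\sigma_1+\dots+\sigma_d=0$; the rank of $w$ is the dimension of the real vector space of abelian relations. Non-degenerate means: the two surface foliations are transversal (their tangent planes are distinct at each point), and the tangent line of the curve foliation is, at each point, not contained in the tangent plane of either surface foliation. The statement is local. *)

theory Defs
  imports "HOL-Analysis.Analysis" "HOL-Library.Extended_Nat"
begin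

fun Ck_on :: "nat \<Rightarrow> 'a::real_normed_vector set \<Rightarrow> ('a \<Rightarrow> 'b::real_normed_vector) \<Rightarrow> bool" where
  "Ck_on 0 S f = continuous_on S f"
| "Ck_on (Suc k) S f =
     (f differentiable_on S \<and> (\<forall>v. Ck_on k S (\<lambda>p. frechet_derivative f (at p) v)))"

definition smooth_on :: "'a::real_normed_vector set \<Rightarrow> ('a \<Rightarrow> 'b::real_normed_vector) \<Rightarrow> bool" where
  "smooth_on S f \<longleftrightarrow> (\<forall>k. Ck_on k S f)"

text \<open>A foliation is represented by its tangent distribution T (T p = tangent space at p of
  the leaf through p), which locally is the kernel of the differential of a smooth submersion
  (the leaves being, locally, the level sets of that submersion).\<close>
definition surface_foliation :: "(real^3) set \<Rightarrow> (real^3 \<Rightarrow> (real^3) set) \<Rightarrow> bool" where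
  "surface_foliation U T \<longleftrightarrow>
     (\<forall>p\<in>U. \<exists>V (g :: real^3 \<Rightarrow> real). open V \<and> p \<in> V \<and> V \<subseteq> U \<and> smooth_on V g \<and>
        (\<forall>q\<in>V. surj (frechet_derivative g (at q)) \<and>
                T q = {v. frechet_derivative g (at q) v = 0}))"

definition curve_foliation :: "(real^3) set \<Rightarrow> (real^3 \<Rightarrow> (real^3) set) \<Rightarrow> bool" where
  "curve_foliation U T \<longleftrightarrow>
     (\<forall>p\<in>U. \<exists>V (g :: real^3 \<Rightarrow> real^2). open V \<and> p \<in> V \<and> V \<subseteq> U \<and> smooth_on V g \<and>
        (\<forall>q\<in>V. surj (frechet_derivative g (at q)) \<and>
                T q = {v. frechet_derivative g (at q) v = 0}))"

definition nondegenerate_web :: "(real^3) set \<Rightarrow> (real^3 \<Rightarrow> (real^3) set) \<Rightarrow>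
    (real^3 \<Rightarrow> (real^3) set) \<Rightarrow> (real^3 \<Rightarrow> (real^3) set) \<Rightarrow> bool" where
  "nondegenerate_web U T1 T2 T3 \<longleftrightarrow>
     (\<forall>p\<in>U. T1 p \<noteq> T2 p \<and> \<not> T3 p \<subseteq> T1 p \<and> \<not> T3 p \<subseteq> T2 p)"

text \<open>A 1-form on an open set of R^3 is represented by its coefficient vector field
  sigma = sigma_1 dx_1 + sigma_2 dx_2 + sigma_3 dx_3, acting on a tangent vector v at p
  as sigma p \<bullet> v. It is closed iff it is smooth and d sigma = 0, i.e. its Jacobian is symmetric.\<close>
type_synonym form1 = "real^3 \<Rightarrow> real^3"

definition closed_form :: "(real^3) set \<Rightarrow> form1 \<Rightarrow> bool" where
  "closed_form U \<sigma> \<longleftrightarrow> smooth_on U \<sigma> \<and>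
     (\<forall>p\<in>U. \<forall>u v. frechet_derivative \<sigma> (at p) u \<bullet> v = frechet_derivative \<sigma> (at p) v \<bullet> u)"

definition vanishes_on_leaves :: "(real^3) set \<Rightarrow> (real^3 \<Rightarrow> (real^3) set) \<Rightarrow> form1 \<Rightarrow> bool" where
  "vanishes_on_leaves U T \<sigma> \<longleftrightarrow> (\<forall>p\<in>U. \<forall>v\<in>T p. \<sigma> p \<bullet> v = 0)"

definition abelian_relation :: "(real^3) set \<Rightarrow> (real^3 \<Rightarrow> (real^3) set) \<Rightarrow>
    (real^3 \<Rightarrow> (real^3) set) \<Rightarrow> (real^3 \<Rightarrow> (real^3) set) \<Rightarrow> form1 \<times> form1 \<times> form1 \<Rightarrow> bool" where
  "abelian_relation U T1 T2 T3 R \<longleftrightarrow>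
     (case R of (\<sigma>1, \<sigma>2, \<sigma>3) \<Rightarrow>
        vanishes_on_leaves U T1 \<sigma>1 \<and> vanishes_on_leaves U T2 \<sigma>2 \<and> vanishes_on_leaves U T3 \<sigma>3 \<and>
        closed_form U \<sigma>1 \<and> closed_form U \<sigma>2 \<and> closed_form U \<sigma>3 \<and>
        (\<forall>p\<in>U. \<sigma>1 p + \<sigma>2 p + \<sigma>3 p = 0))"

definition independent_on :: "(real^3) set \<Rightarrow> nat \<Rightarrow> (nat \<Rightarrow> form1 \<times> form1 \<times> form1) \<Rightarrow> bool" where
  "independent_on U n R \<longleftrightarrow>
     (\<forall>c :: nat \<Rightarrow> real.
        (\<forall>p\<in>U. (\<Sum>k<n. c k *\<^sub>R fst (R k) p) = 0 \<and>
                (\<Sum>k<n. c k *\<^sub>R fst (snd (R k)) p) = 0 \<and>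
                (\<Sum>k<n. c k *\<^sub>R snd (snd (R k)) p) = 0)
        \<longrightarrow> (\<forall>k<n. c k = 0))"

text \<open>Rank: dimension (possibly infinite) of the real vector space of abelian relations,
  i.e. the supremum of the sizes of linearly independent finite families.\<close>
definition web_rank :: "(real^3) set \<Rightarrow> (real^3 \<Rightarrow> (real^3) set) \<Rightarrow>
    (real^3 \<Rightarrow> (real^3) set) \<Rightarrow> (real^3 \<Rightarrow> (real^3) set) \<Rightarrow> enat" where
  "web_rank U T1 T2 T3 =
     Sup {enat n | n. \<exists>R. (\<forall>k<n. abelian_relation U T1 T2 T3 (R k)) \<and> independent_on U n R}"

end

theory Submission
  imports Defs
begin


lemma smooth_Ck: "smooth_on S f \<Longrightarrow> Ck_on k S f"
  unfolding smooth_on_def by (erule allE)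

lemma smooth_cont: "smooth_on S f \<Longrightarrow> continuous_on S f"
  using smooth_Ck[of S f 0] by simp

lemma smooth_deriv: "smooth_on S f \<Longrightarrow> smooth_on S (\<lambda>p. frechet_derivative f (at p) v)"
  unfolding smooth_on_def
proof
  fix k assume "\<forall>k. Ck_on k S f"
  then have "Ck_on (Suc k) S f" by (rule spec)
  then show "Ck_on k S (\<lambda>p. frechet_derivative f (at p) v)" by simp
qed

lemma smooth_has_derivative:
  assumes "open S" "smooth_on S f" "x \<in> S"
  shows "(f has_derivative frechet_derivative f (at x)) (at x)"
proof -
  have "Ck_on (Suc 0) S f" using smooth_Ck[OF assms(2)] .
  then have "f differentiable_on S" by simp
  then have "f differentiable (at x within S)" using assms(3) unfolding differentiable_on_def by blast
  then have "f differentiable (at x)" unfolding at_within_open[OF assms(3,1)] .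
  then show ?thesis unfolding frechet_derivative_works .
qed
lemma line_deriv:
  fixes f :: "'a::real_normed_vector \<Rightarrow> real"
  assumes "(f has_derivative f') (at (a + t *\<^sub>R v))"
  shows "((\<lambda>t. f (a + t *\<^sub>R v)) has_real_derivative f' v) (at t)"
proof -
  have l: "((\<lambda>t. a + t *\<^sub>R v) has_derivative (\<lambda>h. h *\<^sub>R v)) (at t)"
    by (auto intro!: derivative_eq_intros)
  have D: "((\<lambda>t. f (a + t *\<^sub>R v)) has_derivative (\<lambda>h. f' (h *\<^sub>R v))) (at t)"
    using has_derivative_compose[OF l assms] by (simp add: o_def)
  have lin: "linear f'" using assms has_derivative_linear by blast
  have E: "f' (h *\<^sub>R v) = f' v * h" for h
  proof -
    have "f' (h *\<^sub>R v) = h *\<^sub>R f' v" by (rule linear_scale[OF lin])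
    also have "\<dots> = f' v * h" unfolding real_scaleR_def by (rule mult.commute)
    finally show ?thesis .
  qed
  have eq: "(\<lambda>h. f' (h *\<^sub>R v)) = (*) (f' v)"
    by (rule ext) (rule E)
  have "((\<lambda>t. f (a + t *\<^sub>R v)) has_derivative (*) (f' v)) (at t)"
    using D unfolding eq .
  then show ?thesis unfolding has_field_derivative_def .
qed

lemma second_diff:
  fixes g :: "'a::real_normed_vector \<Rightarrow> real"
  assumes S: "open S" "smooth_on S g" and B: "ball x \<delta> \<subseteq> S" and s: "s > 0"
    and sd: "s * (norm u + norm w) < \<delta>"
  shows "\<exists>\<xi>. dist x \<xi> < \<delta> \<and> g (x + s *\<^sub>R w + s *\<^sub>R u) - g (x + s *\<^sub>R w) - g (x + s *\<^sub>R u) + g x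
           = s^2 * frechet_derivative (\<lambda>p. frechet_derivative g (at p) w) (at \<xi>) u"
proof -
  let ?G = "\<lambda>p. frechet_derivative g (at p) w"
  have inb: "dist x (x + a *\<^sub>R w + b *\<^sub>R u) < \<delta>" if "0 \<le> a" "a \<le> s" "0 \<le> b" "b \<le> s" for a b
  proof -
    have dd: "dist x (x + v) = norm v" for v by (metis add_diff_cancel_left' dist_commute dist_norm)
    have "dist x (x + a *\<^sub>R w + b *\<^sub>R u) = norm (a *\<^sub>R w + b *\<^sub>R u)"
      using dd[of "a *\<^sub>R w + b *\<^sub>R u"] by (simp add: add.assoc)
    also have "\<dots> \<le> a * norm w + b * norm u"
      using norm_triangle_ineq[of "a *\<^sub>R w" "b *\<^sub>R u"] that by simp
    also have "\<dots> \<le> s * norm w + s * norm u"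
      using that by (intro add_mono mult_right_mono) auto
    also have "\<dots> = s * (norm u + norm w)" by (simp add: distrib_left)
    finally show ?thesis using sd by linarith
  qed
  have inS: "x + a *\<^sub>R w + b *\<^sub>R u \<in> S" if "0 \<le> a" "a \<le> s" "0 \<le> b" "b \<le> s" for a b
    using inb[OF that] B by auto
  have inS0: "x + a *\<^sub>R w \<in> S" if "0 \<le> a" "a \<le> s" for a
    using inS[of a 0] that s by simp
  define \<phi> where "\<phi> t = g (x + t *\<^sub>R w + s *\<^sub>R u) - g (x + t *\<^sub>R w)" for t
  have d\<phi>: "(\<phi> has_real_derivative (?G (x + s *\<^sub>R u + t *\<^sub>R w) - ?G (x + t *\<^sub>R w))) (at t)"
    if "0 \<le> t" "t \<le> s" for t
  proof -
    have e: "x + t *\<^sub>R w + s *\<^sub>R u = (x + s *\<^sub>R u) + t *\<^sub>R w" by (simp add: algebra_simps)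
    have "x + s *\<^sub>R u + t *\<^sub>R w \<in> S" using inS[of t s] that s by (simp only: e)
    from line_deriv[OF smooth_has_derivative[OF S this]]
    have 1: "((\<lambda>t. g ((x + s *\<^sub>R u) + t *\<^sub>R w)) has_real_derivative ?G (x + s *\<^sub>R u + t *\<^sub>R w)) (at t)" .
    from line_deriv[OF smooth_has_derivative[OF S inS0[OF that]]]
    have 2: "((\<lambda>t. g (x + t *\<^sub>R w)) has_real_derivative ?G (x + t *\<^sub>R w)) (at t)" by simp
    have e2: "x + t' *\<^sub>R w + s *\<^sub>R u = (x + s *\<^sub>R u) + t' *\<^sub>R w" for t' by (simp add: algebra_simps)
    have "\<phi> = (\<lambda>t. g ((x + s *\<^sub>R u) + t *\<^sub>R w) - g (x + t *\<^sub>R w))"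
      unfolding \<phi>_def e2 ..
    then show ?thesis using DERIV_diff[OF 1 2] by simp
  qed
  obtain t1 where t1: "0 < t1" "t1 < s" "\<phi> s - \<phi> 0 = (s - 0) * (?G (x + s *\<^sub>R u + t1 *\<^sub>R w) - ?G (x + t1 *\<^sub>R w))"
    using MVT2[OF s d\<phi>] by blast
  define \<psi> where "\<psi> r = ?G (x + t1 *\<^sub>R w + r *\<^sub>R u)" for r
  have d\<psi>: "(\<psi> has_real_derivative frechet_derivative ?G (at (x + t1 *\<^sub>R w + r *\<^sub>R u)) u) (at r)"
    if "0 \<le> r" "r \<le> s" for r
  proof -
    have "x + t1 *\<^sub>R w + r *\<^sub>R u \<in> S" using inS[of t1 r] that t1 by simp
    then have "(?G has_derivative frechet_derivative ?G (at (x + t1 *\<^sub>R w + r *\<^sub>R u))) (at (x + t1 *\<^sub>R w + r *\<^sub>R u))"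
      by (rule smooth_has_derivative[OF S(1) smooth_deriv[OF S(2)]])
    from line_deriv[OF this] show ?thesis unfolding \<psi>_def .
  qed
  obtain r1 where r1: "0 < r1" "r1 < s" "\<psi> s - \<psi> 0 = (s - 0) * frechet_derivative ?G (at (x + t1 *\<^sub>R w + r1 *\<^sub>R u)) u"
    using MVT2[OF s d\<psi>] by blast
  show ?thesis
  proof (intro exI conjI)
    show "dist x (x + t1 *\<^sub>R w + r1 *\<^sub>R u) < \<delta>"
      using inb[of t1 r1] t1 r1 by simp
    have e: "x + s *\<^sub>R u + t1 *\<^sub>R w = x + t1 *\<^sub>R w + s *\<^sub>R u" by (simp add: algebra_simps)
    have pe: "\<psi> s - \<psi> 0 = ?G (x + s *\<^sub>R u + t1 *\<^sub>R w) - ?G (x + t1 *\<^sub>R w)"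
      unfolding \<psi>_def e by simp
    define F where "F = frechet_derivative ?G (at (x + t1 *\<^sub>R w + r1 *\<^sub>R u)) u"
    have A: "?G (x + s *\<^sub>R u + t1 *\<^sub>R w) - ?G (x + t1 *\<^sub>R w) = s * F"
      using pe r1(3) by (simp add: F_def)
    have B: "\<phi> s - \<phi> 0 = s * (s * F)" using t1(3) A by simp
    have C: "\<phi> s - \<phi> 0 = g (x + s *\<^sub>R w + s *\<^sub>R u) - g (x + s *\<^sub>R w) - g (x + s *\<^sub>R u) + g x"
      by (simp add: \<phi>_def)
    have X: "g (x + s *\<^sub>R w + s *\<^sub>R u) - g (x + s *\<^sub>R w) - g (x + s *\<^sub>R u) + g x = s * (s * F)"
      using B C by linarith
    show "g (x + s *\<^sub>R w + s *\<^sub>R u) - g (x + s *\<^sub>R w) - g (x + s *\<^sub>R u) + g x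
           = s^2 * frechet_derivative ?G (at (x + t1 *\<^sub>R w + r1 *\<^sub>R u)) u"
      unfolding X F_def power2_eq_square by (rule mult.assoc[symmetric])
  qed
qed



lemma schwarz:
  fixes g :: "'a::real_normed_vector \<Rightarrow> real"
  assumes S: "open S" "smooth_on S g" and x: "x \<in> S"
  shows "frechet_derivative (\<lambda>p. frechet_derivative g (at p) w) (at x) u
       = frechet_derivative (\<lambda>p. frechet_derivative g (at p) u) (at x) w"
proof (rule ccontr)
  define H1 where "H1 = (\<lambda>z. frechet_derivative (\<lambda>p. frechet_derivative g (at p) w) (at z) u)"
  define H2 where "H2 = (\<lambda>z. frechet_derivative (\<lambda>p. frechet_derivative g (at p) u) (at z) w)"
  assume "frechet_derivative (\<lambda>p. frechet_derivative g (at p) w) (at x) u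
       \<noteq> frechet_derivative (\<lambda>p. frechet_derivative g (at p) u) (at x) w"
  then have ne: "H1 x \<noteq> H2 x" by (simp add: H1_def H2_def)
  define d where "d = \<bar>H1 x - H2 x\<bar> / 2"
  have d: "d > 0" using ne by (simp add: d_def)
  have c1: "continuous_on S H1" unfolding H1_def
    by (rule smooth_cont, rule smooth_deriv, rule smooth_deriv, rule S(2))
  have c2: "continuous_on S H2" unfolding H2_def
    by (rule smooth_cont, rule smooth_deriv, rule smooth_deriv, rule S(2))
  obtain d1 where d1: "d1 > 0" "\<And>x'. x' \<in> S \<Longrightarrow> dist x' x < d1 \<Longrightarrow> dist (H1 x') (H1 x) < d"
    using c1 x d unfolding continuous_on_iff by metis
  obtain d2 where d2: "d2 > 0" "\<And>x'. x' \<in> S \<Longrightarrow> dist x' x < d2 \<Longrightarrow> dist (H2 x') (H2 x) < d"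
    using c2 x d unfolding continuous_on_iff by metis
  obtain e0 where e0: "e0 > 0" "ball x e0 \<subseteq> S" using S(1) x openE by blast
  define \<delta> where "\<delta> = min e0 (min d1 d2)"
  have \<delta>: "\<delta> > 0" "ball x \<delta> \<subseteq> S" "\<delta> \<le> d1" "\<delta> \<le> d2"
    using e0 d1 d2 by (auto simp: \<delta>_def)
  define N where "N = norm u + norm w + 1"
  define s where "s = \<delta> / (2 * N)"
  have npos: "N > 0" unfolding N_def by (simp add: add_nonneg_pos)
  have s: "s > 0" unfolding s_def using \<delta> npos by simp
  have "s * (norm u + norm w) \<le> s * N" using s unfolding N_def by simp
  also have "\<dots> = \<delta> / 2" unfolding s_def using npos by simp
  also have "\<dots> < \<delta>" using \<delta> by simp
  finally have sd: "s * (norm u + norm w) < \<delta>" .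
  have sd2: "s * (norm w + norm u) < \<delta>" using sd by (simp add: add.commute)
  obtain \<xi>1 where \<xi>1: "dist x \<xi>1 < \<delta>"
    "g (x + s *\<^sub>R w + s *\<^sub>R u) - g (x + s *\<^sub>R w) - g (x + s *\<^sub>R u) + g x = s^2 * H1 \<xi>1"
    using second_diff[OF S \<delta>(2) s sd] unfolding H1_def by blast
  obtain \<xi>2 where \<xi>2: "dist x \<xi>2 < \<delta>"
    "g (x + s *\<^sub>R u + s *\<^sub>R w) - g (x + s *\<^sub>R u) - g (x + s *\<^sub>R w) + g x = s^2 * H2 \<xi>2"
    using second_diff[OF S \<delta>(2) s sd2] unfolding H2_def by blast
  have comm: "x + s *\<^sub>R u + s *\<^sub>R w = x + s *\<^sub>R w + s *\<^sub>R u" by (simp add: algebra_simps)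
  have "s^2 * H1 \<xi>1 = s^2 * H2 \<xi>2" using \<xi>1(2) \<xi>2(2) unfolding comm by linarith
  then have eq: "H1 \<xi>1 = H2 \<xi>2" using s by simp
  have in1: "\<xi>1 \<in> S" "\<xi>2 \<in> S" using \<xi>1(1) \<xi>2(1) \<delta>(2) by auto
  have "dist (H1 \<xi>1) (H1 x) < d" using d1(2)[OF in1(1)] \<xi>1(1) \<delta>(3) by (simp add: dist_commute)
  moreover have "dist (H2 \<xi>2) (H2 x) < d" using d2(2)[OF in1(2)] \<xi>2(1) \<delta>(4) by (simp add: dist_commute)
  ultimately have "\<bar>H1 x - H2 x\<bar> < 2 * d" using eq by (simp add: dist_real_def)
  then show False by (simp add: d_def)
qed

lemma hyper_decomp:
  fixes s :: "'a::real_inner"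
  assumes L: "linear L" and v0: "L v0 \<noteq> (0::real)" and K: "\<And>v. L v = 0 \<Longrightarrow> s \<bullet> v = 0"
  shows "s \<bullet> v = (s \<bullet> v0 / L v0) * L v"
proof -
  define c where "c = L v / L v0"
  have "L (v - c *\<^sub>R v0) = L v - c * L v0"
    using L by (simp add: linear_diff linear_scale)
  also have "\<dots> = 0" using v0 by (simp add: c_def)
  finally have "s \<bullet> (v - c *\<^sub>R v0) = 0" by (rule K)
  then have "s \<bullet> v = c * (s \<bullet> v0)" by (simp add: inner_diff_right)
  then show ?thesis using v0 by (simp add: c_def)
qed

lemma kills_all:
  fixes s :: "'a::real_inner"
  assumes L: "linear L" and v0: "L v0 \<noteq> (0::real)" and K: "\<And>v. L v = 0 \<Longrightarrow> s \<bullet> v = 0"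
    and z: "s \<bullet> v0 = 0"
  shows "s = 0"
proof -
  have "s \<bullet> s = 0" using hyper_decomp[OF L v0 K, of s] z by simp
  then show ?thesis by simp
qed

lemma pt_zero:
  fixes s1 s2 s3 :: "'a::real_inner"
  assumes L: "linear L" and l: "L l \<noteq> (0::real)" and K: "\<And>v. L v = 0 \<Longrightarrow> s2 \<bullet> v = 0"
    and s3: "s3 \<bullet> l = 0" and sum: "s1 + s2 + s3 = 0" and z: "s1 = 0"
  shows "s2 = 0 \<and> s3 = 0"
proof -
  have "s3 = - s2" using sum z by (simp add: eq_neg_iff_add_eq_0 add.commute)
  then have "s2 \<bullet> l = 0" using s3 by simp
  then have "s2 = 0" using kills_all[OF L l K] by blast
  then show ?thesis using \<open>s3 = - s2\<close> by simp
qed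



lemma scalar_deriv:
  fixes g :: "'a::real_inner \<Rightarrow> real" and \<sigma> :: "'a \<Rightarrow> 'a"
  assumes V: "open V" "smooth_on V g" and W: "open W" "W \<subseteq> V" and q: "q \<in> W"
   and nz: "\<And>x. x \<in> W \<Longrightarrow> frechet_derivative g (at x) v0 \<noteq> 0"
   and perp: "\<And>x v. x \<in> W \<Longrightarrow> frechet_derivative g (at x) v = 0 \<Longrightarrow> \<sigma> x \<bullet> v = 0"
   and d\<sigma>: "(\<sigma> has_derivative D\<sigma>) (at q)" and sym: "\<And>u v. D\<sigma> u \<bullet> v = D\<sigma> v \<bullet> u"
  shows "\<exists>Da. ((\<lambda>x. \<sigma> x \<bullet> v0 / frechet_derivative g (at x) v0) has_derivative Da) (at q)
            \<and> (\<forall>w. frechet_derivative g (at q) w = 0 \<longrightarrow> Da w = 0)"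
proof -
  define G where "G = (\<lambda>v x. frechet_derivative g (at x) v)"
  define a where "a = (\<lambda>x. \<sigma> x \<bullet> v0 / G v0 x)"
  define DG where "DG = (\<lambda>v. frechet_derivative (G v) (at q))"
  have qV: "q \<in> V" using q W by auto
  have dG: "(G v has_derivative DG v) (at q)" for v
    unfolding DG_def G_def by (rule smooth_has_derivative[OF V(1) smooth_deriv[OF V(2)] qV])
  have linx: "linear (frechet_derivative g (at x))" if "x \<in> W" for x
  proof -
    have "x \<in> V" using that W by auto
    then show ?thesis using smooth_has_derivative[OF V] has_derivative_linear by blast
  qed
  have f1: "((\<lambda>x. \<sigma> x \<bullet> v0) has_derivative (\<lambda>h. D\<sigma> h \<bullet> v0)) (at q)"
    by (rule has_derivative_inner_left[OF d\<sigma>])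
  have nzq: "G v0 q \<noteq> 0" using nz[OF q] by (simp add: G_def)
  define Da where "Da = (\<lambda>h. - (\<sigma> q \<bullet> v0) * (inverse (G v0 q) * DG v0 h * inverse (G v0 q)) + (D\<sigma> h \<bullet> v0) / G v0 q)"
  have da: "(a has_derivative Da) (at q)"
    unfolding a_def Da_def by (rule has_derivative_divide[OF f1 dG nzq])
  have ident: "\<sigma> x \<bullet> v = a x * G v x" if "x \<in> W" for x v
  proof -
    have "\<sigma> x \<bullet> v = (\<sigma> x \<bullet> v0 / frechet_derivative g (at x) v0) * frechet_derivative g (at x) v"
      by (rule hyper_decomp[OF linx[OF that] nz[OF that]]) (rule perp[OF that])
    then show ?thesis by (simp add: a_def G_def)
  qed
  have key: "D\<sigma> h \<bullet> v = a q * DG v h + Da h * G v q" for v h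
  proof -
    have d2: "((\<lambda>x. a x * G v x) has_derivative (\<lambda>h. a q * DG v h + Da h * G v q)) (at q)"
      by (rule has_derivative_mult[OF da dG])
    have d2': "((\<lambda>x. \<sigma> x \<bullet> v) has_derivative (\<lambda>h. a q * DG v h + Da h * G v q)) (at q)"
      by (rule has_derivative_transform_within_open[OF d2 W(1) q]) (simp add: ident)
    have d1: "((\<lambda>x. \<sigma> x \<bullet> v) has_derivative (\<lambda>h. D\<sigma> h \<bullet> v)) (at q)"
      by (rule has_derivative_inner_left[OF d\<sigma>])
    have "(\<lambda>h. D\<sigma> h \<bullet> v) = (\<lambda>h. a q * DG v h + Da h * G v q)"
      by (rule has_derivative_unique[OF d1 d2'])
    then show ?thesis by (rule fun_cong)
  qed
  have kill: "Da w = 0" if w: "frechet_derivative g (at q) w = 0" for w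
  proof -
    have Gw: "G w q = 0" using w by (simp add: G_def)
    have e1: "D\<sigma> w \<bullet> v0 = a q * DG v0 w + Da w * G v0 q" by (rule key)
    have e2: "D\<sigma> v0 \<bullet> w = a q * DG w v0" using key[of v0 w] Gw by simp
    have sch: "DG v0 w = DG w v0"
      unfolding DG_def G_def by (rule schwarz[OF V qV])
    have "Da w * G v0 q = 0" using e1 e2 sch sym[of w v0] by simp
    then show ?thesis using nzq by simp
  qed
  show ?thesis
    using da kill unfolding a_def G_def by blast
qed



lemma riesz:
  fixes f :: "'a::euclidean_space \<Rightarrow> real"
  assumes "linear f"
  shows "f v = (\<Sum>i\<in>Basis. f i *\<^sub>R i) \<bullet> v"
proof -
  have "f v = f v \<bullet> 1" by simp
  also have "\<dots> = (\<Sum>i\<in>Basis. (v \<bullet> i) * (f i \<bullet> 1))" by (rule Linear_Algebra.linear_componentwise[OF assms])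
  also have "\<dots> = (\<Sum>i\<in>Basis. f i * (i \<bullet> v))"
    by (intro sum.cong refl) (simp add: inner_commute)
  also have "\<dots> = (\<Sum>i\<in>Basis. f i *\<^sub>R i) \<bullet> v"
    by (simp add: inner_sum_left)
  finally show ?thesis .
qed

lemma idx3: "(1::3) \<noteq> 2" "(1::3) \<noteq> 3" "(2::3) \<noteq> 3" "(2::3) \<noteq> 1" "(3::3) \<noteq> 1" "(3::3) \<noteq> 2"
  by simp_all

lemma cross_inj:
  fixes a b v :: "real^3"
  assumes "a \<bullet> v = 0" "b \<bullet> v = 0" "cross3 a b \<bullet> v = 0" "cross3 a b \<noteq> 0"
  shows "v = 0"
proof -
  have id: "(cross3 a b \<bullet> cross3 a b) *\<^sub>R v = (v \<bullet> a) *\<^sub>R cross3 b (cross3 a b) + (v \<bullet> b) *\<^sub>R cross3 (cross3 a b) a + (v \<bullet> cross3 a b) *\<^sub>R cross3 a b"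
    unfolding cross3_def inner_vec_def sum_3 vec_eq_iff vector_def
    by (simp add: forall_3 vector_3 algebra_simps)
  have "(cross3 a b \<bullet> cross3 a b) *\<^sub>R v = 0" using id assms by (simp add: inner_commute)
  then show ?thesis using assms(4) by simp
qed



lemma pt_lemma:
  assumes FF: "surface_foliation U Ta" and q: "q \<in> U" and nd: "\<not> Tb q \<subseteq> Ta q"
    and v2: "\<forall>v\<in>Ta q. sb \<bullet> v = 0" and v3: "\<forall>v\<in>Tb q. sc \<bullet> v = 0"
    and sum: "sa + sb + sc = 0" and z: "sa = 0"
  shows "sb = 0 \<and> sc = 0"
proof -
  have "\<exists>V (g :: real^3 \<Rightarrow> real). open V \<and> q \<in> V \<and> V \<subseteq> U \<and> smooth_on V g \<and>
        (\<forall>q\<in>V. surj (frechet_derivative g (at q)) \<and>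
                Ta q = {v. frechet_derivative g (at q) v = 0})"
    using FF q unfolding surface_foliation_def by (rule bspec)
  then obtain V and g :: "real^3 \<Rightarrow> real" where V: "open V" "q \<in> V" "V \<subseteq> U" "smooth_on V g"
    and TT: "\<forall>q\<in>V. surj (frechet_derivative g (at q)) \<and>
                Ta q = {v. frechet_derivative g (at q) v = 0}"
    by blast
  have T: "Ta q = {v. frechet_derivative g (at q) v = 0}" using TT V(2) by blast
  have lin: "linear (frechet_derivative g (at q))"
    using smooth_has_derivative[OF V(1) V(4) V(2)] has_derivative_linear by blast
  obtain l where l: "l \<in> Tb q" "l \<notin> Ta q" using nd by blast
  have ln: "frechet_derivative g (at q) l \<noteq> 0" using l(2) T by simp
  show ?thesis
  proof (rule pt_zero[OF lin ln _ _ sum z])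
    fix v assume "frechet_derivative g (at q) v = 0"
    then show "sb \<bullet> v = 0" using v2 T by simp
  next
    show "sc \<bullet> l = 0" using v3 l(1) by simp
  qed
qed

lemma chart_const:
  fixes A :: "real^3 \<Rightarrow> real"
  assumes B: "convex B" and dA: "\<And>z. z \<in> B \<Longrightarrow> (A has_derivative DA z) (at z)"
    and kill: "\<And>z d. z \<in> B \<Longrightarrow> d $ j = 0 \<Longrightarrow> DA z d = 0"
    and y: "y \<in> B" "y' \<in> B" "y $ j = y' $ j"
  shows "A y = A y'"
proof -
  define F where "F t = A (y + t *\<^sub>R (y' - y))" for t
  have inB: "y + t *\<^sub>R (y' - y) \<in> B" if "0 \<le> t" "t \<le> 1" for t
  proof -
    have "(1 - t) *\<^sub>R y + t *\<^sub>R y' \<in> B" by (rule convexD[OF B y(1) y(2)]) (use that in auto)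
    moreover have "(1 - t) *\<^sub>R y + t *\<^sub>R y' = y + t *\<^sub>R (y' - y)" by (simp add: algebra_simps)
    ultimately show ?thesis by simp
  qed
  have dF: "(F has_real_derivative 0) (at t)" if "0 \<le> t" "t \<le> 1" for t
  proof -
    have z: "y + t *\<^sub>R (y' - y) \<in> B" by (rule inB[OF that])
    have "(F has_real_derivative DA (y + t *\<^sub>R (y' - y)) (y' - y)) (at t)"
      unfolding F_def by (rule line_deriv[OF dA[OF z]])
    moreover have "DA (y + t *\<^sub>R (y' - y)) (y' - y) = 0"
      by (rule kill[OF z]) (use y(3) in simp)
    ultimately show ?thesis by simp
  qed
  have H: "\<And>x. 0 \<le> x \<Longrightarrow> x \<le> 1 \<Longrightarrow> (F has_real_derivative (\<lambda>_. 0::real) x) (at x)"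
    using dF by simp
  have "\<exists>t::real. 0 < t \<and> t < 1 \<and> F 1 - F 0 = (1 - 0) * (\<lambda>_. 0::real) t"
    by (rule MVT2[of 0 1 F, OF _ H]) simp
  then have "F 1 = F 0" by auto
  then show ?thesis by (simp add: F_def)
qed

lemma comp3:
  "(a *\<^sub>R axis 1 1 + b *\<^sub>R axis 2 1 + c *\<^sub>R axis 3 1 :: real^3) $ 1 = a"
  "(a *\<^sub>R axis 1 1 + b *\<^sub>R axis 2 1 + c *\<^sub>R axis 3 1 :: real^3) $ 2 = b"
  "(a *\<^sub>R axis 1 1 + b *\<^sub>R axis 2 1 + c *\<^sub>R axis 3 1 :: real^3) $ 3 = c"
  by (simp_all add: axis_def)



lemma foliation_chart:
  assumes F: "surface_foliation U T" and p: "p \<in> U"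
  obtains V and g :: "real^3 \<Rightarrow> real" where "open V" "p \<in> V" "V \<subseteq> U" "smooth_on V g"
    "\<And>q. q \<in> V \<Longrightarrow> surj (frechet_derivative g (at q))"
    "\<And>q. q \<in> V \<Longrightarrow> T q = {v. frechet_derivative g (at q) v = 0}"
proof -
  have "\<exists>V (g :: real^3 \<Rightarrow> real). open V \<and> p \<in> V \<and> V \<subseteq> U \<and> smooth_on V g \<and>
        (\<forall>q\<in>V. surj (frechet_derivative g (at q)) \<and>
                T q = {v. frechet_derivative g (at q) v = 0})"
    using F p unfolding surface_foliation_def by (rule bspec)
  then obtain V and g :: "real^3 \<Rightarrow> real" where "open V" "p \<in> V" "V \<subseteq> U" "smooth_on V g"
    and TT: "\<forall>q\<in>V. surj (frechet_derivative g (at q)) \<and>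
                T q = {v. frechet_derivative g (at q) v = 0}"
    by blast
  then show ?thesis using that by blast
qed

lemma scalar_setup:
  fixes s :: "real^3 \<Rightarrow> real^3"
  assumes U: "open U" and F: "surface_foliation U T" and p: "p \<in> U"
    and van: "\<And>q v. q \<in> U \<Longrightarrow> v \<in> T q \<Longrightarrow> s q \<bullet> v = 0"
    and ds: "\<And>q. q \<in> U \<Longrightarrow> (s has_derivative frechet_derivative s (at q)) (at q)"
    and sym: "\<And>q u v. q \<in> U \<Longrightarrow> frechet_derivative s (at q) u \<bullet> v = frechet_derivative s (at q) v \<bullet> u"
  obtains W and g :: "real^3 \<Rightarrow> real" and a :: "real^3 \<Rightarrow> real"
  where "open W" "p \<in> W" "W \<subseteq> U"
    "\<And>q. q \<in> W \<Longrightarrow> T q = {v. frechet_derivative g (at q) v = 0}"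
    "\<And>q. q \<in> W \<Longrightarrow> (g has_derivative frechet_derivative g (at q)) (at q)"
    "\<And>q. continuous_on W (\<lambda>x. frechet_derivative g (at x) q)"
    "\<And>q. q \<in> W \<Longrightarrow> \<exists>Da. (a has_derivative Da) (at q) \<and> (\<forall>w. frechet_derivative g (at q) w = 0 \<longrightarrow> Da w = 0)"
    "\<And>q. q \<in> W \<Longrightarrow> a q = 0 \<longleftrightarrow> s q = 0"
proof -
  obtain V and g :: "real^3 \<Rightarrow> real" where V: "open V" "p \<in> V" "V \<subseteq> U" "smooth_on V g"
    and su: "\<And>q. q \<in> V \<Longrightarrow> surj (frechet_derivative g (at q))"
    and T: "\<And>q. q \<in> V \<Longrightarrow> T q = {v. frechet_derivative g (at q) v = 0}"
    using foliation_chart[OF F p] by metis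
  obtain v0 where v0: "frechet_derivative g (at p) v0 = 1" using su[OF V(2)] by (metis surjD)
  have cv: "continuous_on V (\<lambda>x. frechet_derivative g (at x) v)" for v
    by (rule smooth_cont[OF smooth_deriv[OF V(4)]])
  define W where "W = V \<inter> (\<lambda>x. frechet_derivative g (at x) v0) -` (- {0})"
  have W: "open W" "p \<in> W" "W \<subseteq> V"
    unfolding W_def using continuous_open_preimage[OF cv V(1), of "- {0}"] V(2) v0 by auto
  have nz: "\<And>x. x \<in> W \<Longrightarrow> frechet_derivative g (at x) v0 \<noteq> 0" unfolding W_def by auto
  have dg: "(g has_derivative frechet_derivative g (at q)) (at q)" if "q \<in> W" for q
    using smooth_has_derivative[OF V(1) V(4)] that W by auto
  have lin: "linear (frechet_derivative g (at q))" if "q \<in> W" for q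
    using dg[OF that] has_derivative_linear by blast
  have perp: "s x \<bullet> v = 0" if "x \<in> W" "frechet_derivative g (at x) v = 0" for x v
    using van[of x v] T[of x] that W V by auto
  define a where "a = (\<lambda>x. s x \<bullet> v0 / frechet_derivative g (at x) v0)"
  show ?thesis
  proof (rule that[of W g a])
    show "open W" "p \<in> W" "W \<subseteq> U" using W V by auto
    show "\<And>q. q \<in> W \<Longrightarrow> T q = {v. frechet_derivative g (at q) v = 0}" using T W by auto
    show "\<And>q. q \<in> W \<Longrightarrow> (g has_derivative frechet_derivative g (at q)) (at q)" by (rule dg)
    show "\<And>q. continuous_on W (\<lambda>x. frechet_derivative g (at x) q)"
      using cv W(3) continuous_on_subset by blast
    fix q assume q: "q \<in> W"
    show "\<exists>Da. (a has_derivative Da) (at q) \<and> (\<forall>w. frechet_derivative g (at q) w = 0 \<longrightarrow> Da w = 0)"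
      unfolding a_def
    proof (rule scalar_deriv[OF V(1) V(4) W(1) W(3) q nz perp])
      show "(s has_derivative frechet_derivative s (at q)) (at q)" using ds q W V by auto
      show "\<And>u v. frechet_derivative s (at q) u \<bullet> v = frechet_derivative s (at q) v \<bullet> u"
        using sym q W V by auto
    qed
    show "a q = 0 \<longleftrightarrow> s q = 0"
    proof
      assume "a q = 0"
      then have "s q \<bullet> v0 = 0" using nz[OF q] by (simp add: a_def)
      then show "s q = 0" using kills_all[OF lin[OF q] nz[OF q] perp[OF q]] by blast
    qed (simp add: a_def)
  qed
qed



lemma local_zero:
  fixes s1 s2 s3 :: "real^3 \<Rightarrow> real^3"
  assumes U: "open U" and p: "p \<in> U"
   and F1: "surface_foliation U T1" and F2: "surface_foliation U T2"
   and nd: "nondegenerate_web U T1 T2 T3"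
   and van1: "\<And>q v. q \<in> U \<Longrightarrow> v \<in> T1 q \<Longrightarrow> s1 q \<bullet> v = 0"
   and van2: "\<And>q v. q \<in> U \<Longrightarrow> v \<in> T2 q \<Longrightarrow> s2 q \<bullet> v = 0"
   and van3: "\<And>q v. q \<in> U \<Longrightarrow> v \<in> T3 q \<Longrightarrow> s3 q \<bullet> v = 0"
   and sum: "\<And>q. q \<in> U \<Longrightarrow> s1 q + s2 q + s3 q = 0"
   and ds1: "\<And>q. q \<in> U \<Longrightarrow> (s1 has_derivative frechet_derivative s1 (at q)) (at q)"
   and sym1: "\<And>q u v. q \<in> U \<Longrightarrow> frechet_derivative s1 (at q) u \<bullet> v = frechet_derivative s1 (at q) v \<bullet> u"
   and ds2: "\<And>q. q \<in> U \<Longrightarrow> (s2 has_derivative frechet_derivative s2 (at q)) (at q)"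
   and sym2: "\<And>q u v. q \<in> U \<Longrightarrow> frechet_derivative s2 (at q) u \<bullet> v = frechet_derivative s2 (at q) v \<bullet> u"
   and z: "s1 p = 0"
  shows "\<exists>Ob. open Ob \<and> p \<in> Ob \<and> (\<forall>x\<in>Ob. s1 x = 0)"
proof -
  have ndq: "T1 q \<noteq> T2 q" "\<not> T3 q \<subseteq> T1 q" "\<not> T3 q \<subseteq> T2 q" if "q \<in> U" for q
    using nd that unfolding nondegenerate_web_def by auto
  have z12: "s2 q = 0 \<and> s3 q = 0" if "q \<in> U" "s1 q = 0" for q
  proof -
    have a: "\<forall>v\<in>T2 q. s2 q \<bullet> v = 0" using van2[OF that(1)] by blast
    have b: "\<forall>v\<in>T3 q. s3 q \<bullet> v = 0" using van3[OF that(1)] by blast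
    show ?thesis
      by (rule pt_lemma[where U=U and Ta=T2 and q=q and Tb=T3 and sb="s2 q" and sc="s3 q" and sa="s1 q",
            OF F2 that(1) ndq(3)[OF that(1)] a b sum[OF that(1)] that(2)])
  qed
  have z21: "s1 q = 0 \<and> s3 q = 0" if "q \<in> U" "s2 q = 0" for q
  proof -
    have a: "\<forall>v\<in>T1 q. s1 q \<bullet> v = 0" using van1[OF that(1)] by blast
    have b: "\<forall>v\<in>T3 q. s3 q \<bullet> v = 0" using van3[OF that(1)] by blast
    have "s2 q + s1 q + s3 q = 0" using sum[OF that(1)] by (simp add: add.commute add.left_commute)
    then show ?thesis
      by (rule pt_lemma[where U=U and Ta=T1 and q=q and Tb=T3 and sb="s1 q" and sc="s3 q" and sa="s2 q",
            OF F1 that(1) ndq(2)[OF that(1)] a b _ that(2)])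
  qed
  obtain W1 and g1 :: "real^3 \<Rightarrow> real" and a1 :: "real^3 \<Rightarrow> real"
    where W1: "open W1" "p \<in> W1" "W1 \<subseteq> U"
    and T1eq: "\<And>q. q \<in> W1 \<Longrightarrow> T1 q = {v. frechet_derivative g1 (at q) v = 0}"
    and dg1: "\<And>q. q \<in> W1 \<Longrightarrow> (g1 has_derivative frechet_derivative g1 (at q)) (at q)"
    and cg1: "\<And>q. continuous_on W1 (\<lambda>x. frechet_derivative g1 (at x) q)"
    and da1: "\<And>q. q \<in> W1 \<Longrightarrow> \<exists>Da. (a1 has_derivative Da) (at q) \<and> (\<forall>w. frechet_derivative g1 (at q) w = 0 \<longrightarrow> Da w = 0)"
    and za1: "\<And>q. q \<in> W1 \<Longrightarrow> a1 q = 0 \<longleftrightarrow> s1 q = 0"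
    using scalar_setup[OF U F1 p van1 ds1 sym1] by blast
  obtain W2 and g2 :: "real^3 \<Rightarrow> real" and a2 :: "real^3 \<Rightarrow> real"
    where W2: "open W2" "p \<in> W2" "W2 \<subseteq> U"
    and T2eq: "\<And>q. q \<in> W2 \<Longrightarrow> T2 q = {v. frechet_derivative g2 (at q) v = 0}"
    and dg2: "\<And>q. q \<in> W2 \<Longrightarrow> (g2 has_derivative frechet_derivative g2 (at q)) (at q)"
    and cg2: "\<And>q. continuous_on W2 (\<lambda>x. frechet_derivative g2 (at x) q)"
    and da2: "\<And>q. q \<in> W2 \<Longrightarrow> \<exists>Da. (a2 has_derivative Da) (at q) \<and> (\<forall>w. frechet_derivative g2 (at q) w = 0 \<longrightarrow> Da w = 0)"
    and za2: "\<And>q. q \<in> W2 \<Longrightarrow> a2 q = 0 \<longleftrightarrow> s2 q = 0"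
    using scalar_setup[OF U F2 p van2 ds2 sym2] by blast
  define D1 where "D1 = (\<lambda>x. frechet_derivative g1 (at x))"
  define D2 where "D2 = (\<lambda>x. frechet_derivative g2 (at x))"
  have lin1: "linear (D1 p)" unfolding D1_def using dg1[OF W1(2)] has_derivative_linear by blast
  have lin2: "linear (D2 p)" unfolding D2_def using dg2[OF W2(2)] has_derivative_linear by blast
  define N1 where "N1 = (\<Sum>i\<in>Basis. D1 p i *\<^sub>R i)"
  define N2 where "N2 = (\<Sum>i\<in>Basis. D2 p i *\<^sub>R i)"
  have rep1: "D1 p v = N1 \<bullet> v" for v unfolding N1_def by (rule riesz[OF lin1])
  have rep2: "D2 p v = N2 \<bullet> v" for v unfolding N2_def by (rule riesz[OF lin2])
  have T1p: "T1 p = {v. N1 \<bullet> v = 0}" using T1eq[OF W1(2)] rep1 unfolding D1_def by simp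
  have T2p: "T2 p = {v. N2 \<bullet> v = 0}" using T2eq[OF W2(2)] rep2 unfolding D2_def by simp
  have N1nz: "N1 \<noteq> 0"
  proof
    assume "N1 = 0"
    then have "T1 p = UNIV" using T1p by simp
    then show False using ndq(2)[OF p] by simp
  qed
  have N2nz: "N2 \<noteq> 0"
  proof
    assume "N2 = 0"
    then have "T2 p = UNIV" using T2p by simp
    then show False using ndq(3)[OF p] by simp
  qed
  define k where "k = cross3 N1 N2"
  have knz: "k \<noteq> 0"
  proof
    assume "k = 0"
    then have "collinear {0, N1, N2}" unfolding k_def using cross_eq_0 by blast
    then obtain c where c: "N2 = c *\<^sub>R N1" using N1nz N2nz collinear_lemma by blast
    then have "c \<noteq> 0" using N2nz by auto
    then have "T2 p = T1 p" unfolding T1p T2p c by simp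
    then show False using ndq(1)[OF p] by simp
  qed
  define e1 e2 e3 where "e1 = (axis 1 1 :: real^3)" and "e2 = (axis 2 1 :: real^3)" and "e3 = (axis 3 1 :: real^3)"
  define \<Phi> where "\<Phi> = (\<lambda>x. g1 x *\<^sub>R e1 + g2 x *\<^sub>R e2 + (k \<bullet> x) *\<^sub>R e3)"
  define D\<Phi> where "D\<Phi> = (\<lambda>x h. D1 x h *\<^sub>R e1 + D2 x h *\<^sub>R e2 + (k \<bullet> h) *\<^sub>R e3)"
  have c1: "(D\<Phi> x h) $ 1 = D1 x h" and c2: "(D\<Phi> x h) $ 2 = D2 x h" and c3: "(D\<Phi> x h) $ 3 = k \<bullet> h" for x h
    unfolding D\<Phi>_def e1_def e2_def e3_def by (simp_all only: comp3)
  define U0 where "U0 = W1 \<inter> W2"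
  have U0: "open U0" "p \<in> U0" "U0 \<subseteq> W1" "U0 \<subseteq> W2" "U0 \<subseteq> U"
    unfolding U0_def using W1 W2 by auto
  have d\<Phi>: "(\<Phi> has_derivative D\<Phi> x) (at x)" if "x \<in> U0" for x
  proof -
    have a: "((\<lambda>x. g1 x *\<^sub>R e1) has_derivative (\<lambda>h. D1 x h *\<^sub>R e1)) (at x)"
      unfolding D1_def by (rule has_derivative_scaleR_left[OF dg1]) (use that U0 in auto)
    have b: "((\<lambda>x. g2 x *\<^sub>R e2) has_derivative (\<lambda>h. D2 x h *\<^sub>R e2)) (at x)"
      unfolding D2_def by (rule has_derivative_scaleR_left[OF dg2]) (use that U0 in auto)
    have ki: "((\<lambda>x. k \<bullet> x) has_derivative (\<lambda>h. k \<bullet> h)) (at x)"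
      by (rule bounded_linear_imp_has_derivative[OF bounded_linear_inner_right])
    have c: "((\<lambda>x. (k \<bullet> x) *\<^sub>R e3) has_derivative (\<lambda>h. (k \<bullet> h) *\<^sub>R e3)) (at x)"
      by (rule has_derivative_scaleR_left[OF ki])
    show ?thesis unfolding \<Phi>_def D\<Phi>_def
      by (rule has_derivative_add[OF has_derivative_add[OF a b] c])
  qed
  have bl: "bounded_linear (D\<Phi> x)" if "x \<in> U0" for x
    using d\<Phi>[OF that] has_derivative_bounded_linear by blast
  define fb where "fb = (\<lambda>x. Blinfun (D\<Phi> x))"
  have fbapp: "blinfun_apply (fb x) = D\<Phi> x" if "x \<in> U0" for x
    unfolding fb_def by (rule bounded_linear_Blinfun_apply[OF bl[OF that]])
  have derf: "(\<Phi> has_derivative blinfun_apply (fb x)) (at x)" if "x \<in> U0" for x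
    using d\<Phi>[OF that] fbapp[OF that] by simp
  have contf: "continuous_on U0 fb"
  proof (rule continuous_on_blinfun_componentwise)
    fix i :: "real^3"
    have "continuous_on U0 (\<lambda>x. D1 x i *\<^sub>R e1 + D2 x i *\<^sub>R e2 + (k \<bullet> i) *\<^sub>R e3)"
    proof (intro continuous_on_add continuous_on_scaleR continuous_on_const)
      show "continuous_on U0 (\<lambda>x. D1 x i)" unfolding D1_def
        using continuous_on_subset[OF cg1 U0(3)] .
      show "continuous_on U0 (\<lambda>x. D2 x i)" unfolding D2_def
        using continuous_on_subset[OF cg2 U0(4)] .
    qed
    then show "continuous_on U0 (\<lambda>x. blinfun_apply (fb x) i)"
      by (rule continuous_on_eq) (simp add: fbapp D\<Phi>_def)
  qed
  have injp: "v = 0" if "D\<Phi> p v = 0" for v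
  proof (rule cross_inj)
    show "N1 \<bullet> v = 0" using c1[of p v] that rep1 by simp
    show "N2 \<bullet> v = 0" using c2[of p v] that rep2 by simp
    show "cross3 N1 N2 \<bullet> v = 0" using c3[of p v] that by (simp add: k_def)
    show "cross3 N1 N2 \<noteq> 0" using knz by (simp add: k_def)
  qed
  have linp: "linear (D\<Phi> p)" using bl[OF U0(2)] bounded_linear.linear by blast
  have "inj (D\<Phi> p)" using injp linear_injective_0[OF linp] by blast
  then obtain gi where gi: "linear gi" "gi \<circ> D\<Phi> p = id"
    using linear_injective_left_inverse[OF linp] by blast
  have blgi: "bounded_linear gi" using gi(1) linear_conv_bounded_linear by blast
  define invf where "invf = Blinfun gi"
  have invf: "invf o\<^sub>L fb p = id_blinfun"
  proof (rule blinfun_eqI)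
    fix i
    have "gi (D\<Phi> p i) = i" using gi(2) by (metis comp_apply id_apply)
    then show "blinfun_apply (invf o\<^sub>L fb p) i = blinfun_apply id_blinfun i"
      by (simp add: invf_def bounded_linear_Blinfun_apply[OF blgi] fbapp[OF U0(2)])
  qed
  obtain U' Vy \<Psi> \<Psi>' where IFT: "open U'" "U' \<subseteq> U0" "p \<in> U'" "open Vy" "\<Phi> p \<in> Vy"
    "homeomorphism U' Vy \<Phi> \<Psi>"
    "\<And>y. y \<in> Vy \<Longrightarrow> (\<Psi> has_derivative (\<Psi>' y)) (at y)"
    "\<And>y. y \<in> Vy \<Longrightarrow> \<Psi>' y = inv (blinfun_apply (fb (\<Psi> y)))"
    "\<And>y. y \<in> Vy \<Longrightarrow> bij (blinfun_apply (fb (\<Psi> y)))"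
    using inverse_function_theorem[OF U0(1) derf contf U0(2) invf] by blast
  have hom: "homeomorphism U' Vy \<Phi> \<Psi>" by (rule IFT(6))
  have \<Psi>in: "\<Psi> y \<in> U'" if "y \<in> Vy" for y
    using homeomorphism_image2[OF hom] that by blast
  have \<Phi>\<Psi>: "\<Phi> (\<Psi> y) = y" if "y \<in> Vy" for y by (rule homeomorphism_apply2[OF hom that])
  have \<Psi>\<Phi>: "\<Psi> (\<Phi> x) = x" if "x \<in> U'" for x by (rule homeomorphism_apply1[OF hom that])
  have \<Psi>U0: "\<Psi> y \<in> U0" if "y \<in> Vy" for y using \<Psi>in[OF that] IFT(2) by blast
  have invdir: "D\<Phi> (\<Psi> y) (\<Psi>' y d) = d" if "y \<in> Vy" for y d
  proof -
    have "blinfun_apply (fb (\<Psi> y)) (inv (blinfun_apply (fb (\<Psi> y))) d) = d"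
      by (rule surj_f_inv_f[OF bij_is_surj[OF IFT(9)[OF that]]])
    then show ?thesis using IFT(8)[OF that] fbapp[OF \<Psi>U0[OF that]] by simp
  qed
  have dir1: "D1 (\<Psi> y) (\<Psi>' y d) = d $ 1" if "y \<in> Vy" for y d
    using c1[of "\<Psi> y" "\<Psi>' y d"] invdir[OF that] by simp
  have dir2: "D2 (\<Psi> y) (\<Psi>' y d) = d $ 2" if "y \<in> Vy" for y d
    using c2[of "\<Psi> y" "\<Psi>' y d"] invdir[OF that] by simp
  obtain \<epsilon> where \<epsilon>: "\<epsilon> > 0" "ball (\<Phi> p) \<epsilon> \<subseteq> Vy" using IFT(4,5) openE by blast
  define B where "B = ball (\<Phi> p) \<epsilon>"
  have BV: "B \<subseteq> Vy" using \<epsilon> by (simp add: B_def)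
  have ex1: "\<forall>z\<in>B. \<exists>D. ((\<lambda>y. a1 (\<Psi> y)) has_derivative D) (at z) \<and> (\<forall>d. d $ 1 = 0 \<longrightarrow> D d = 0)"
  proof
    fix z assume zB: "z \<in> B"
    then have zV: "z \<in> Vy" using BV by blast
    have xW: "\<Psi> z \<in> W1" using \<Psi>U0[OF zV] U0 by blast
    obtain Da where Da: "(a1 has_derivative Da) (at (\<Psi> z))"
      "\<And>w. frechet_derivative g1 (at (\<Psi> z)) w = 0 \<Longrightarrow> Da w = 0"
      using da1[OF xW] by blast
    show "\<exists>D. ((\<lambda>y. a1 (\<Psi> y)) has_derivative D) (at z) \<and> (\<forall>d. d $ 1 = 0 \<longrightarrow> D d = 0)"
    proof (intro exI conjI allI impI)
      show "((\<lambda>y. a1 (\<Psi> y)) has_derivative (\<lambda>h. Da (\<Psi>' z h))) (at z)"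
        by (rule has_derivative_compose[OF IFT(7)[OF zV] Da(1)])
      fix d :: "real^3" assume "d $ 1 = 0"
      then show "Da (\<Psi>' z d) = 0" using Da(2) dir1[OF zV, of d] unfolding D1_def by simp
    qed
  qed
  have ex2: "\<forall>z\<in>B. \<exists>D. ((\<lambda>y. a2 (\<Psi> y)) has_derivative D) (at z) \<and> (\<forall>d. d $ 2 = 0 \<longrightarrow> D d = 0)"
  proof
    fix z assume zB: "z \<in> B"
    then have zV: "z \<in> Vy" using BV by blast
    have xW: "\<Psi> z \<in> W2" using \<Psi>U0[OF zV] U0 by blast
    obtain Da where Da: "(a2 has_derivative Da) (at (\<Psi> z))"
      "\<And>w. frechet_derivative g2 (at (\<Psi> z)) w = 0 \<Longrightarrow> Da w = 0"
      using da2[OF xW] by blast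
    show "\<exists>D. ((\<lambda>y. a2 (\<Psi> y)) has_derivative D) (at z) \<and> (\<forall>d. d $ 2 = 0 \<longrightarrow> D d = 0)"
    proof (intro exI conjI allI impI)
      show "((\<lambda>y. a2 (\<Psi> y)) has_derivative (\<lambda>h. Da (\<Psi>' z h))) (at z)"
        by (rule has_derivative_compose[OF IFT(7)[OF zV] Da(1)])
      fix d :: "real^3" assume "d $ 2 = 0"
      then show "Da (\<Psi>' z d) = 0" using Da(2) dir2[OF zV, of d] unfolding D2_def by simp
    qed
  qed
  obtain DA1 where DA1: "\<And>z. z \<in> B \<Longrightarrow> ((\<lambda>y. a1 (\<Psi> y)) has_derivative DA1 z) (at z)"
    "\<And>z d. z \<in> B \<Longrightarrow> d $ 1 = 0 \<Longrightarrow> DA1 z d = 0"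
    using bchoice[OF ex1] by blast
  obtain DA2 where DA2: "\<And>z. z \<in> B \<Longrightarrow> ((\<lambda>y. a2 (\<Psi> y)) has_derivative DA2 z) (at z)"
    "\<And>z d. z \<in> B \<Longrightarrow> d $ 2 = 0 \<Longrightarrow> DA2 z d = 0"
    using bchoice[OF ex2] by blast
  have cB: "convex B" unfolding B_def by (rule convex_ball)
  have const1: "a1 (\<Psi> y) = a1 (\<Psi> y')" if "y \<in> B" "y' \<in> B" "y $ 1 = y' $ 1" for y y'
    by (rule chart_const[OF cB DA1(1) DA1(2) that])
  have const2: "a2 (\<Psi> y) = a2 (\<Psi> y')" if "y \<in> B" "y' \<in> B" "y $ 2 = y' $ 2" for y y'
    by (rule chart_const[OF cB DA2(1) DA2(2) that])
  define Ob where "Ob = U' \<inter> \<Phi> -` B"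
  have oOb: "open Ob" unfolding Ob_def B_def
    by (rule continuous_open_preimage[OF homeomorphism_cont1[OF hom] IFT(1) open_ball])
  have pOb: "p \<in> Ob" unfolding Ob_def B_def using IFT(3) \<epsilon>(1) by simp
  have a1p: "a1 p = 0" using za1[OF W1(2)] z by simp
  have zero: "s1 x = 0" if xO: "x \<in> Ob" for x
  proof -
    define y0 where "y0 = \<Phi> p"
    define y where "y = \<Phi> x"
    have xU': "x \<in> U'" and yB: "y \<in> B" using xO unfolding Ob_def y_def by auto
    have y0B: "y0 \<in> B" unfolding y0_def B_def using \<epsilon>(1) by simp
    have \<Psi>y: "\<Psi> y = x" unfolding y_def by (rule \<Psi>\<Phi>[OF xU'])
    have \<Psi>y0: "\<Psi> y0 = p" unfolding y0_def by (rule \<Psi>\<Phi>[OF IFT(3)])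
    define ys where "ys = y0 + ((y - y0) $ 2) *\<^sub>R e2"
    have ys1: "ys $ 1 = y0 $ 1" and ys2: "ys $ 2 = y $ 2"
      unfolding ys_def e2_def by (simp_all add: axis_def)
    have "dist y0 ys = \<bar>(y - y0) $ 2\<bar>" unfolding ys_def e2_def by (simp add: dist_norm)
    also have "\<dots> \<le> norm (y - y0)" by (rule component_le_norm_cart)
    also have "\<dots> < \<epsilon>" using yB unfolding B_def y0_def by (simp add: dist_norm norm_minus_commute)
    finally have ysB: "ys \<in> B" unfolding B_def y0_def by simp
    have ysV: "ys \<in> Vy" using ysB BV by blast
    have "a1 (\<Psi> ys) = a1 (\<Psi> y0)" by (rule const1[OF ysB y0B ys1])
    then have "a1 (\<Psi> ys) = 0" using \<Psi>y0 a1p by simp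
    moreover have q1: "\<Psi> ys \<in> W1" "\<Psi> ys \<in> W2" "\<Psi> ys \<in> U" using \<Psi>U0[OF ysV] U0 by auto
    ultimately have "s1 (\<Psi> ys) = 0" using za1 by blast
    then have "s2 (\<Psi> ys) = 0" using z12[OF q1(3)] by blast
    then have "a2 (\<Psi> ys) = 0" using za2[OF q1(2)] by blast
    moreover have "a2 (\<Psi> y) = a2 (\<Psi> ys)" by (rule const2[OF yB ysB ys2[symmetric]])
    ultimately have "a2 x = 0" using \<Psi>y by simp
    moreover have xW: "x \<in> W2" "x \<in> U" using xU' IFT(2) U0 by auto
    ultimately have "s2 x = 0" using za2 by blast
    then show "s1 x = 0" using z21[OF xW(2)] by blast
  qed
  show ?thesis using oOb pOb zero by blast
qed


lemma UC:
  fixes sa sb sc :: "real^3 \<Rightarrow> real^3"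
  assumes U: "open U" "connected U"
   and FA: "surface_foliation U Ta" and FB: "surface_foliation U Tb"
   and nd: "nondegenerate_web U Ta Tb Tc"
   and van1: "\<And>q v. q \<in> U \<Longrightarrow> v \<in> Ta q \<Longrightarrow> sa q \<bullet> v = 0"
   and van2: "\<And>q v. q \<in> U \<Longrightarrow> v \<in> Tb q \<Longrightarrow> sb q \<bullet> v = 0"
   and van3: "\<And>q v. q \<in> U \<Longrightarrow> v \<in> Tc q \<Longrightarrow> sc q \<bullet> v = 0"
   and sum: "\<And>q. q \<in> U \<Longrightarrow> sa q + sb q + sc q = 0"
   and ds1: "\<And>q. q \<in> U \<Longrightarrow> (sa has_derivative frechet_derivative sa (at q)) (at q)"
   and sym1: "\<And>q u v. q \<in> U \<Longrightarrow> frechet_derivative sa (at q) u \<bullet> v = frechet_derivative sa (at q) v \<bullet> u"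
   and ds2: "\<And>q. q \<in> U \<Longrightarrow> (sb has_derivative frechet_derivative sb (at q)) (at q)"
   and sym2: "\<And>q u v. q \<in> U \<Longrightarrow> frechet_derivative sb (at q) u \<bullet> v = frechet_derivative sb (at q) v \<bullet> u"
   and c1: "continuous_on U sa"
   and pz: "pz \<in> U" and z: "sa pz = 0"
   and p: "p \<in> U"
  shows "sa p = 0 \<and> sb p = 0 \<and> sc p = 0"
proof -
  define Z where "Z = {x \<in> U. sa x = 0}"
  have oZ: "open Z"
    unfolding open_subopen[of Z]
  proof
    fix x assume "x \<in> Z"
    then have x: "x \<in> U" "sa x = 0" unfolding Z_def by auto
    obtain Ob where Ob: "open Ob" "x \<in> Ob" "\<forall>y\<in>Ob. sa y = 0"
      using local_zero[OF U(1) x(1) FA FB nd van1 van2 van3 sum ds1 sym1 ds2 sym2 x(2)] by blast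
    show "\<exists>T. open T \<and> x \<in> T \<and> T \<subseteq> Z"
      using Ob x U(1) by (intro exI[of _ "Ob \<inter> U"]) (auto simp: Z_def)
  qed
  have "openin (top_of_set U) Z" unfolding openin_open
    using oZ by (intro exI[of _ Z]) (auto simp: Z_def)
  moreover have "closedin (top_of_set U) Z"
    unfolding Z_def by (rule continuous_closedin_preimage_constant[OF c1])
  ultimately have "Z = {} \<or> Z = U" using U(2) unfolding connected_clopen by blast
  moreover have "pz \<in> Z" using pz z by (simp add: Z_def)
  ultimately have "Z = U" by blast
  then have s1p: "sa p = 0" using p unfolding Z_def by blast
  have nd3: "\<not> Tc p \<subseteq> Tb p" using nd p unfolding nondegenerate_web_def by blast
  have a: "\<forall>v\<in>Tb p. sb p \<bullet> v = 0" using van2[OF p] by blast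
  have b: "\<forall>v\<in>Tc p. sc p \<bullet> v = 0" using van3[OF p] by blast
  have "sb p = 0 \<and> sc p = 0"
    by (rule pt_lemma[where U=U and Ta=Tb and q=p and Tb=Tc and sb="sb p" and sc="sc p" and sa="sa p",
            OF FB p nd3 a b sum[OF p] s1p])
  then show ?thesis using s1p by blast
qed

lemma sum2:
  fixes f :: "nat \<Rightarrow> 'a::real_vector"
  assumes "2 \<le> n"
  shows "(\<Sum>k<n. (if k = 0 then a else if k = 1 then b else 0) *\<^sub>R f k) = a *\<^sub>R f 0 + b *\<^sub>R f 1"
proof -
  obtain m where n: "n = m + 2" using assms by (metis add.commute le_Suc_ex)
  have "(\<Sum>k<m + 2. (if k = 0 then a else if k = 1 then b else 0) *\<^sub>R f k) = a *\<^sub>R f 0 + b *\<^sub>R f 1"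
  proof (induction m)
    case 0
    have "{..<(0::nat) + 2} = {0, 1}" by auto
    then show ?case by simp
  next
    case (Suc m)
    have "{..<Suc m + 2} = insert (m + 2) {..<m + 2}" by auto
    then show ?case using Suc by simp
  qed
  then show ?thesis using n by simp
qed



definition good :: "(real^3) set \<Rightarrow> (real^3 \<Rightarrow> (real^3) set) \<Rightarrow> (real^3 \<Rightarrow> (real^3) set) \<Rightarrow>
    (real^3 \<Rightarrow> (real^3) set) \<Rightarrow> form1 \<Rightarrow> form1 \<Rightarrow> form1 \<Rightarrow> bool" where
  "good U T1 T2 T3 s1 s2 s3 \<longleftrightarrow>
   (\<forall>q\<in>U. (\<forall>v\<in>T1 q. s1 q \<bullet> v = 0) \<and> (\<forall>v\<in>T2 q. s2 q \<bullet> v = 0) \<and> (\<forall>v\<in>T3 q. s3 q \<bullet> v = 0)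
     \<and> s1 q + s2 q + s3 q = 0
     \<and> (s1 has_derivative frechet_derivative s1 (at q)) (at q)
     \<and> (\<forall>u v. frechet_derivative s1 (at q) u \<bullet> v = frechet_derivative s1 (at q) v \<bullet> u)
     \<and> (s2 has_derivative frechet_derivative s2 (at q)) (at q)
     \<and> (\<forall>u v. frechet_derivative s2 (at q) u \<bullet> v = frechet_derivative s2 (at q) v \<bullet> u))
   \<and> continuous_on U s1"

lemma good_UC:
  assumes U: "open U" "connected U"
   and F1: "surface_foliation U T1" and F2: "surface_foliation U T2"
   and nd: "nondegenerate_web U T1 T2 T3"
   and G: "good U T1 T2 T3 s1 s2 s3"
   and p0: "p0 \<in> U" and z: "s1 p0 = 0" and p: "p \<in> U"
  shows "s1 p = 0 \<and> s2 p = 0 \<and> s3 p = 0"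
proof (rule UC[where U=U and Ta=T1 and Tb=T2 and Tc=T3 and sa=s1 and sb=s2 and sc=s3 and pz=p0 and p=p])
  show "open U" "connected U" using U by auto
  show "surface_foliation U T1" "surface_foliation U T2" "nondegenerate_web U T1 T2 T3" by fact+
  show "p0 \<in> U" "s1 p0 = 0" "p \<in> U" by fact+
  show "\<And>q v. q \<in> U \<Longrightarrow> v \<in> T1 q \<Longrightarrow> s1 q \<bullet> v = 0" using G unfolding good_def by blast
  show "\<And>q v. q \<in> U \<Longrightarrow> v \<in> T2 q \<Longrightarrow> s2 q \<bullet> v = 0" using G unfolding good_def by blast
  show "\<And>q v. q \<in> U \<Longrightarrow> v \<in> T3 q \<Longrightarrow> s3 q \<bullet> v = 0" using G unfolding good_def by blast
  show "\<And>q. q \<in> U \<Longrightarrow> s1 q + s2 q + s3 q = 0" using G unfolding good_def by blast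
  show "\<And>q. q \<in> U \<Longrightarrow> (s1 has_derivative frechet_derivative s1 (at q)) (at q)" using G unfolding good_def by blast
  show "\<And>q u v. q \<in> U \<Longrightarrow> frechet_derivative s1 (at q) u \<bullet> v = frechet_derivative s1 (at q) v \<bullet> u"
    using G unfolding good_def by blast
  show "\<And>q. q \<in> U \<Longrightarrow> (s2 has_derivative frechet_derivative s2 (at q)) (at q)" using G unfolding good_def by blast
  show "\<And>q u v. q \<in> U \<Longrightarrow> frechet_derivative s2 (at q) u \<bullet> v = frechet_derivative s2 (at q) v \<bullet> u"
    using G unfolding good_def by blast
  show "continuous_on U s1" using G unfolding good_def by blast
qed

lemma abel_good:
  assumes U: "open U" and R: "abelian_relation U T1 T2 T3 R"
  shows "good U T1 T2 T3 (fst R) (fst (snd R)) (snd (snd R))"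
proof -
  obtain s1 s2 s3 where Rs: "R = (s1, s2, s3)" by (cases R) auto
  have A: "vanishes_on_leaves U T1 s1" "vanishes_on_leaves U T2 s2" "vanishes_on_leaves U T3 s3"
    "closed_form U s1" "closed_form U s2" "\<forall>p\<in>U. s1 p + s2 p + s3 p = 0"
    using R unfolding Rs abelian_relation_def by auto
  have sm: "smooth_on U s1" "smooth_on U s2" using A(4,5) unfolding closed_form_def by auto
  show ?thesis unfolding Rs good_def
  proof (simp only: fst_conv snd_conv, rule conjI, rule ballI, intro conjI)
    fix q assume q: "q \<in> U"
    show "\<forall>v\<in>T1 q. s1 q \<bullet> v = 0" using A(1) q unfolding vanishes_on_leaves_def by blast
    show "\<forall>v\<in>T2 q. s2 q \<bullet> v = 0" using A(2) q unfolding vanishes_on_leaves_def by blast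
    show "\<forall>v\<in>T3 q. s3 q \<bullet> v = 0" using A(3) q unfolding vanishes_on_leaves_def by blast
    show "s1 q + s2 q + s3 q = 0" using A(6) q by blast
    show "(s1 has_derivative frechet_derivative s1 (at q)) (at q)" by (rule smooth_has_derivative[OF U sm(1) q])
    show "(s2 has_derivative frechet_derivative s2 (at q)) (at q)" by (rule smooth_has_derivative[OF U sm(2) q])
    show "\<forall>u v. frechet_derivative s1 (at q) u \<bullet> v = frechet_derivative s1 (at q) v \<bullet> u"
      using A(4) q unfolding closed_form_def by blast
    show "\<forall>u v. frechet_derivative s2 (at q) u \<bullet> v = frechet_derivative s2 (at q) v \<bullet> u"
      using A(5) q unfolding closed_form_def by blast
  next
    show "continuous_on U s1" by (rule smooth_cont[OF sm(1)])
  qed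
qed

lemma comb_deriv:
  fixes a b :: "real^3 \<Rightarrow> real^3"
  assumes da: "(a has_derivative frechet_derivative a (at q)) (at q)"
    and db: "(b has_derivative frechet_derivative b (at q)) (at q)"
    and sa: "\<forall>u v. frechet_derivative a (at q) u \<bullet> v = frechet_derivative a (at q) v \<bullet> u"
    and sb: "\<forall>u v. frechet_derivative b (at q) u \<bullet> v = frechet_derivative b (at q) v \<bullet> u"
  shows "((\<lambda>x. a x - c *\<^sub>R b x) has_derivative frechet_derivative (\<lambda>x. a x - c *\<^sub>R b x) (at q)) (at q)"
    "\<forall>u v. frechet_derivative (\<lambda>x. a x - c *\<^sub>R b x) (at q) u \<bullet> v = frechet_derivative (\<lambda>x. a x - c *\<^sub>R b x) (at q) v \<bullet> u"
proof -
  have d: "((\<lambda>x. a x - c *\<^sub>R b x) has_derivative (\<lambda>h. frechet_derivative a (at q) h - c *\<^sub>R frechet_derivative b (at q) h)) (at q)"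
    by (rule has_derivative_diff[OF da has_derivative_scaleR_right[OF db]])
  have e: "(\<lambda>h. frechet_derivative a (at q) h - c *\<^sub>R frechet_derivative b (at q) h) = frechet_derivative (\<lambda>x. a x - c *\<^sub>R b x) (at q)"
    by (rule frechet_derivative_at[OF d])
  show "((\<lambda>x. a x - c *\<^sub>R b x) has_derivative frechet_derivative (\<lambda>x. a x - c *\<^sub>R b x) (at q)) (at q)"
    using d unfolding e .
  show "\<forall>u v. frechet_derivative (\<lambda>x. a x - c *\<^sub>R b x) (at q) u \<bullet> v = frechet_derivative (\<lambda>x. a x - c *\<^sub>R b x) (at q) v \<bullet> u"
    unfolding e[symmetric] using sa sb by (simp add: inner_diff_left)
qed

lemma good_comb:
  assumes A: "good U T1 T2 T3 a1 a2 a3" and B: "good U T1 T2 T3 b1 b2 b3"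
  shows "good U T1 T2 T3 (\<lambda>x. a1 x - c *\<^sub>R b1 x) (\<lambda>x. a2 x - c *\<^sub>R b2 x) (\<lambda>x. a3 x - c *\<^sub>R b3 x)"
  unfolding good_def
proof (rule conjI, rule ballI, intro conjI)
  fix q assume q: "q \<in> U"
  have a: "(\<forall>v\<in>T1 q. a1 q \<bullet> v = 0) \<and> (\<forall>v\<in>T2 q. a2 q \<bullet> v = 0) \<and> (\<forall>v\<in>T3 q. a3 q \<bullet> v = 0)
     \<and> a1 q + a2 q + a3 q = 0
     \<and> (a1 has_derivative frechet_derivative a1 (at q)) (at q)
     \<and> (\<forall>u v. frechet_derivative a1 (at q) u \<bullet> v = frechet_derivative a1 (at q) v \<bullet> u)
     \<and> (a2 has_derivative frechet_derivative a2 (at q)) (at q)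
     \<and> (\<forall>u v. frechet_derivative a2 (at q) u \<bullet> v = frechet_derivative a2 (at q) v \<bullet> u)"
    using A q unfolding good_def by blast
  have b: "(\<forall>v\<in>T1 q. b1 q \<bullet> v = 0) \<and> (\<forall>v\<in>T2 q. b2 q \<bullet> v = 0) \<and> (\<forall>v\<in>T3 q. b3 q \<bullet> v = 0)
     \<and> b1 q + b2 q + b3 q = 0
     \<and> (b1 has_derivative frechet_derivative b1 (at q)) (at q)
     \<and> (\<forall>u v. frechet_derivative b1 (at q) u \<bullet> v = frechet_derivative b1 (at q) v \<bullet> u)
     \<and> (b2 has_derivative frechet_derivative b2 (at q)) (at q)
     \<and> (\<forall>u v. frechet_derivative b2 (at q) u \<bullet> v = frechet_derivative b2 (at q) v \<bullet> u)"
    using B q unfolding good_def by blast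
  show "\<forall>v\<in>T1 q. (a1 q - c *\<^sub>R b1 q) \<bullet> v = 0" using a b by (simp add: inner_diff_left)
  show "\<forall>v\<in>T2 q. (a2 q - c *\<^sub>R b2 q) \<bullet> v = 0" using a b by (simp add: inner_diff_left)
  show "\<forall>v\<in>T3 q. (a3 q - c *\<^sub>R b3 q) \<bullet> v = 0" using a b by (simp add: inner_diff_left)
  have "(a1 q - c *\<^sub>R b1 q) + (a2 q - c *\<^sub>R b2 q) + (a3 q - c *\<^sub>R b3 q)
      = (a1 q + a2 q + a3 q) - c *\<^sub>R (b1 q + b2 q + b3 q)"
    by (simp add: algebra_simps)
  then show "(a1 q - c *\<^sub>R b1 q) + (a2 q - c *\<^sub>R b2 q) + (a3 q - c *\<^sub>R b3 q) = 0" using a b by simp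
  show "((\<lambda>x. a1 x - c *\<^sub>R b1 x) has_derivative frechet_derivative (\<lambda>x. a1 x - c *\<^sub>R b1 x) (at q)) (at q)"
    using comb_deriv(1) a b by blast
  show "\<forall>u v. frechet_derivative (\<lambda>x. a1 x - c *\<^sub>R b1 x) (at q) u \<bullet> v = frechet_derivative (\<lambda>x. a1 x - c *\<^sub>R b1 x) (at q) v \<bullet> u"
    using comb_deriv(2) a b by blast
  show "((\<lambda>x. a2 x - c *\<^sub>R b2 x) has_derivative frechet_derivative (\<lambda>x. a2 x - c *\<^sub>R b2 x) (at q)) (at q)"
    using comb_deriv(1) a b by blast
  show "\<forall>u v. frechet_derivative (\<lambda>x. a2 x - c *\<^sub>R b2 x) (at q) u \<bullet> v = frechet_derivative (\<lambda>x. a2 x - c *\<^sub>R b2 x) (at q) v \<bullet> u"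
    using comb_deriv(2) a b by blast
next
  have "continuous_on U a1" "continuous_on U b1" using A B unfolding good_def by auto
  then show "continuous_on U (\<lambda>x. a1 x - c *\<^sub>R b1 x)"
    by (intro continuous_on_diff continuous_on_scaleR continuous_on_const)
qed

lemma proportional:
  assumes F1: "surface_foliation U T1" and q: "q \<in> U"
    and s: "\<forall>v\<in>T1 q. s \<bullet> v = 0" and s': "\<forall>v\<in>T1 q. s' \<bullet> v = 0" and nz: "s' \<noteq> 0"
  shows "\<exists>c. s - c *\<^sub>R s' = 0"
proof -
  obtain V and g :: "real^3 \<Rightarrow> real" where V: "open V" "q \<in> V" "V \<subseteq> U" "smooth_on V g"
    and su: "\<And>x. x \<in> V \<Longrightarrow> surj (frechet_derivative g (at x))"
    and T: "\<And>x. x \<in> V \<Longrightarrow> T1 x = {v. frechet_derivative g (at x) v = 0}"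
    using foliation_chart[OF F1 q] by metis
  define L where "L = frechet_derivative g (at q)"
  have lin: "linear L" unfolding L_def using smooth_has_derivative[OF V(1) V(4) V(2)] has_derivative_linear by blast
  obtain v0 where v0: "L v0 = 1" using su[OF V(2)] unfolding L_def by (metis surjD)
  have v0': "L v0 \<noteq> 0" using v0 by simp
  have K: "s \<bullet> v = 0" "s' \<bullet> v = 0" if "L v = 0" for v
    using s s' T[OF V(2)] that unfolding L_def by auto
  have nz': "s' \<bullet> v0 \<noteq> 0"
  proof
    assume "s' \<bullet> v0 = 0"
    then have "s' = 0" using kills_all[OF lin v0' K(2)] by blast
    then show False using nz by simp
  qed
  define c where "c = (s \<bullet> v0) / (s' \<bullet> v0)"
  have Kd: "(s - c *\<^sub>R s') \<bullet> v = 0" if "L v = 0" for v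
    using K[OF that] by (simp add: inner_diff_left)
  have "(s - c *\<^sub>R s') \<bullet> v0 = 0" using nz' by (simp add: inner_diff_left c_def)
  then have "s - c *\<^sub>R s' = 0" using kills_all[OF lin v0' Kd] by blast
  then show ?thesis by blast
qed



theorem lemma1:
  fixes U :: "(real^3) set" and T1 T2 T3 :: "real^3 \<Rightarrow> (real^3) set"
  assumes "open U" and "connected U"
    and "surface_foliation U T1" and "surface_foliation U T2" and "curve_foliation U T3"
    and "nondegenerate_web U T1 T2 T3"
  shows "web_rank U T1 T2 T3 \<le> 1"
proof -
  note U = assms(1,2) and F1 = assms(3) and F2 = assms(4) and nd = assms(6)
  have main: "n \<le> 1" if R: "\<forall>k<n. abelian_relation U T1 T2 T3 (R k)" "independent_on U n R" for n R
  proof (rule ccontr)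
    assume "\<not> n \<le> 1"
    then have n2: "2 \<le> n" by simp
    define a1 a2 a3 where "a1 = fst (R 0)" and "a2 = fst (snd (R 0))" and "a3 = snd (snd (R 0))"
    define b1 b2 b3 where "b1 = fst (R 1)" and "b2 = fst (snd (R 1))" and "b3 = snd (snd (R 1))"
    have GA: "good U T1 T2 T3 a1 a2 a3" unfolding a1_def a2_def a3_def
      by (rule abel_good[OF U(1)]) (use R(1) n2 in auto)
    have GB: "good U T1 T2 T3 b1 b2 b3" unfolding b1_def b2_def b3_def
      by (rule abel_good[OF U(1)]) (use R(1) n2 in auto)
    have indep: "\<forall>k<n. c k = 0" if
      "\<forall>p\<in>U. (\<Sum>k<n. c k *\<^sub>R fst (R k) p) = 0 \<and>
                (\<Sum>k<n. c k *\<^sub>R fst (snd (R k)) p) = 0 \<and>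
                (\<Sum>k<n. c k *\<^sub>R snd (snd (R k)) p) = 0" for c
      using R(2) that unfolding independent_on_def by blast
    have S: "(\<Sum>k<n. (if k = 0 then x else if k = 1 then y else 0) *\<^sub>R f (R k) p) = x *\<^sub>R f (R 0) p + y *\<^sub>R f (R 1) p"
      for x y :: real and f :: "form1 \<times> form1 \<times> form1 \<Rightarrow> form1" and p
      using sum2[OF n2, of x y "\<lambda>k. f (R k) p"] by simp
    show False
    proof (cases "\<forall>p\<in>U. b1 p = 0")
      case True
      have Z: "b1 p = 0 \<and> b2 p = 0 \<and> b3 p = 0" if "p \<in> U" for p
        using good_UC[OF U F1 F2 nd GB that _ that] True that by blast
      define c where "c = (\<lambda>k::nat. if k = 0 then 0 else if k = 1 then (1::real) else 0)"
      have "\<forall>k<n. c k = 0"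
      proof (rule indep, intro ballI conjI)
        fix p assume p: "p \<in> U"
        show "(\<Sum>k<n. c k *\<^sub>R fst (R k) p) = 0"
          unfolding c_def S using Z[OF p] by (simp add: b1_def)
        show "(\<Sum>k<n. c k *\<^sub>R fst (snd (R k)) p) = 0"
          unfolding c_def S[where f="\<lambda>r. fst (snd r)"] using Z[OF p] by (simp add: b2_def)
        show "(\<Sum>k<n. c k *\<^sub>R snd (snd (R k)) p) = 0"
          unfolding c_def S[where f="\<lambda>r. snd (snd r)"] using Z[OF p] by (simp add: b3_def)
      qed
      then have "c 1 = 0" using n2 by simp
      then show False by (simp add: c_def)
    next
      case False
      then obtain p0 where p0: "p0 \<in> U" "b1 p0 \<noteq> 0" by blast
      have v1: "\<forall>v\<in>T1 p0. a1 p0 \<bullet> v = 0" "\<forall>v\<in>T1 p0. b1 p0 \<bullet> v = 0"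
        using GA GB p0(1) unfolding good_def by blast+
      obtain c0 where c0: "a1 p0 - c0 *\<^sub>R b1 p0 = 0"
        using proportional[OF F1 p0(1) v1 p0(2)] by blast
      have GD: "good U T1 T2 T3 (\<lambda>x. a1 x - c0 *\<^sub>R b1 x) (\<lambda>x. a2 x - c0 *\<^sub>R b2 x) (\<lambda>x. a3 x - c0 *\<^sub>R b3 x)"
        by (rule good_comb[OF GA GB])
      have Z: "a1 p - c0 *\<^sub>R b1 p = 0 \<and> a2 p - c0 *\<^sub>R b2 p = 0 \<and> a3 p - c0 *\<^sub>R b3 p = 0" if "p \<in> U" for p
        using good_UC[OF U F1 F2 nd GD p0(1) _ that] c0 by blast
      define c where "c = (\<lambda>k::nat. if k = 0 then (1::real) else if k = 1 then - c0 else 0)"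
      have "\<forall>k<n. c k = 0"
      proof (rule indep, intro ballI conjI)
        fix p assume p: "p \<in> U"
        show "(\<Sum>k<n. c k *\<^sub>R fst (R k) p) = 0"
          unfolding c_def S using Z[OF p] by (simp add: a1_def b1_def)
        show "(\<Sum>k<n. c k *\<^sub>R fst (snd (R k)) p) = 0"
          unfolding c_def S[where f="\<lambda>r. fst (snd r)"] using Z[OF p] by (simp add: a2_def b2_def)
        show "(\<Sum>k<n. c k *\<^sub>R snd (snd (R k)) p) = 0"
          unfolding c_def S[where f="\<lambda>r. snd (snd r)"] using Z[OF p] by (simp add: a3_def b3_def)
      qed
      then have "c 0 = 0" using n2 by simp
      then show False by (simp add: c_def)
    qed
  qed
  show ?thesis
    unfolding web_rank_def
  proof (rule Sup_least)
    fix x assume "x \<in> {enat n |n. \<exists>R. (\<forall>k<n. abelian_relation U T1 T2 T3 (R k)) \<and> independent_on U n R}"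
    then obtain n R where x: "x = enat n" "\<forall>k<n. abelian_relation U T1 T2 T3 (R k)" "independent_on U n R"
      by blast
    have "n \<le> 1" by (rule main[OF x(2,3)])
    then show "x \<le> 1" using x(1) by (simp add: one_enat_def)
  qed
qed


end
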